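(* Let $n>1$, $c=0$ and $\rho>0$. Let $(\mathfrak{l},g_\rho^c)$ be the metric Lie algebra described in the context. Then $(\mathfrak{l},g_\rho^c)$ is a solvsoliton: there exist $\lambda\in\mathbb{R}$ and a derivation $D$ of $\mathfrak{l}$ such that the Ricci endomorphism $\mathrm{ric}$ of the left-invariant metric defined by $g_\rho^c$ on the simply connected Lie group with Lie algebra $\mathfrak{l}$ satisfies $\mathrm{ric}=\lambda\,\mathrm{Id}+D$.
   Context: Fix $n\ge 2$, $\rho>0$, $c\ge 0$. The real Lie algebra $\mathfrak{l}$ has basis $B_a^R,B_a^I$ ($a=1,\dots,n-1$), $e_k,f_k$ ($k=0,\dots,n-1$), $Z$. Its brackets are as follows (all brackets of basis elements not listed, up to antisymmetry, are zero). On $\mathfrak{b}=\mathrm{span}\{B_a^R,B_a^I\}$: $[B_1^R,B_1^I]=2B_1^I$, and for $a\in\{2,\dots,n-1\}$: $[B_1^R,B_a^R]=B_a^R$, $[B_1^R,B_a^I]=B_a^I$, $[B_a^R,B_a^I]=\tfrac12 B_1^I$. On $\mathfrak{heis}_{2n+1}=\mathrm{span}\{e_k,f_k,Z\}$: $[e_0,f_0]=Z$, $[e_a,f_a]=-Z$ for $a\ge 1$. Also $[\mathfrak{b},Z]=0$. The mixed brackets are described after complex-bilinear extension, with $E_k:=e_k-if_k$ and $[B,\bar E_k]=\overline{[B,E_k]}$ for $B\in\mathfrak{b}$ real: for $k=0,\dots,n-1$ and $a\in\{2,\dots,n-1\}$, $[B_1^R,E_k]=-\delta_{k0}E_1-\delta_{k1}E_0$,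 $[B_a^R,E_k]=-\tfrac12(\delta_{k0}+\delta_{k1})E_a-\tfrac12\delta_{ka}(E_0-E_1)$, $[B_1^I,E_k]=-i(\delta_{k0}+\delta_{k1})(E_0-E_1)$, $[B_a^I,E_k]=\tfrac{i}{2}(\delta_{k0}+\delta_{k1})E_a-\tfrac{i}{2}\delta_{ka}(E_0-E_1)$. (Here $\mathfrak{b}$ is the Iwasawa subalgebra of $\mathfrak{su}(1,n-1)$ acting on $\mathfrak{heis}_{2n+1}=\mathbb{C}^n\oplus\mathbb{R}Z$ via the standard representation.) The inner product $g_\rho^c$ on $\mathfrak{l}$ is given by $g(B_1^R,B_1^R)=\frac{\rho+c}{\rho}$, $g(B_1^I,B_1^I)=\frac{(\rho+c)^3}{\rho^2(\rho+2c)}$, $g(B_a^R,B_a^R)=g(B_a^I,B_a^I)=\frac{\rho+c}{4\rho}$ ($a\ge2$), $g(e_0,e_0)=g(f_0,f_0)=\frac{\rho+2c}{4\rho^2}$, $g(e_a,e_a)=g(f_a,f_a)=\frac{1}{4\rho}$ ($a\ge1$), $g(Z,Z)=\frac{\rho+c}{4\rho^2(\rho+2c)}$, $g(B_1^I,Z)=-\frac{c(\rho+c)}{2\rho^2(\rho+2c)}$, and all other pairs of distinct basis vectors orthogonal. This is the left-invariant metric on the group $L$ with Lie algebra $\mathfrak{l}$ corresponding to the metric induced on the level sets $\{\rho\}\times K$ of the one-loop deformation (parameter $c$) of the quaternionic Kähler symmetric space $\mathrm{SU}(n,2)/\mathrm{S}(\mathrm{U}(n)\times\mathrm{U}(2))$,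 on which $L$ acts simply transitively and isometrically. A left-invariant metric on a simply connected solvable Lie group is a solvsoliton if $\mathrm{ric}=\lambda\mathrm{Id}+D$ with $\lambda\in\mathbb{R}$, $D$ a derivation of the Lie algebra. *)

theory Defs
  imports Complex_Main
begin

text \<open>Basis labels of the Lie algebra l: BR a = B_a^R, BI a = B_a^I (1 <= a <= n-1),
  Ee k = e_k, Ff k = f_k (0 <= k <= n-1), Zz = Z.\<close>

datatype idx = BR nat | BI nat | Ee nat | Ff nat | Zz

definition lbasis :: "nat \<Rightarrow> idx set" where
  "lbasis n = {BR a | a. 1 \<le> a \<and> a \<le> n - 1} \<union> {BI a | a. 1 \<le> a \<and> a \<le> n - 1}
     \<union> {Ee k | k. k < n} \<union> {Ff k | k. k < n} \<union> {Zz}"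

definition lvec :: "nat \<Rightarrow> (idx \<Rightarrow> real) set" where
  "lvec n = {v. \<forall>i. i \<notin> lbasis n \<longrightarrow> v i = 0}"

definition unitv :: "idx \<Rightarrow> idx \<Rightarrow> real" where
  "unitv i = (\<lambda>j. if j = i then 1 else 0)"

text \<open>Complex coefficient of E_j in [B, E_k] (B a basis element of b).\<close>
fun alpha :: "idx \<Rightarrow> nat \<Rightarrow> nat \<Rightarrow> complex" where
  "alpha (BR a) k j =
     (if a = 1 then - (if k = 0 \<and> j = 1 then 1 else 0) - (if k = 1 \<and> j = 0 then 1 else 0)
      else - (1/2) * (if (k = 0 \<or> k = 1) \<and> j = a then 1 else 0)
           - (1/2) * (if k = a \<and> j = 0 then 1 else 0)
           + (1/2) * (if k = a \<and> j = 1 then 1 else 0))"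
| "alpha (BI a) k j =
     (if a = 1 then - \<i> * (if (k = 0 \<or> k = 1) \<and> j = 0 then 1 else 0)
                   + \<i> * (if (k = 0 \<or> k = 1) \<and> j = 1 then 1 else 0)
      else (\<i>/2) * (if (k = 0 \<or> k = 1) \<and> j = a then 1 else 0)
           - (\<i>/2) * (if k = a \<and> j = 0 then 1 else 0)
           + (\<i>/2) * (if k = a \<and> j = 1 then 1 else 0))"
| "alpha _ k j = 0"

text \<open>Real form: since [B,E_k] = [B,e_k] - i [B,f_k] and
  (a+ib)(e_j - i f_j) = (a e_j + b f_j) + i (b e_j - a f_j).\<close>
definition mixE :: "idx \<Rightarrow> nat \<Rightarrow> idx \<Rightarrow> real" where
  "mixE B k = (\<lambda>v. case v of Ee j \<Rightarrow> Re (alpha B k j) | Ff j \<Rightarrow> Im (alpha B k j) | _ \<Rightarrow> 0)"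

definition mixF :: "idx \<Rightarrow> nat \<Rightarrow> idx \<Rightarrow> real" where
  "mixF B k = (\<lambda>v. case v of Ee j \<Rightarrow> - Im (alpha B k j) | Ff j \<Rightarrow> Re (alpha B k j) | _ \<Rightarrow> 0)"

text \<open>Listed brackets (one orientation each).\<close>
fun sc :: "idx \<Rightarrow> idx \<Rightarrow> idx \<Rightarrow> real" where
  "sc (BR a) (BI b) =
     (if a = 1 \<and> b = 1 then (\<lambda>v. 2 * unitv (BI 1) v)
      else if a \<ge> 2 \<and> b = a then (\<lambda>v. 1/2 * unitv (BI 1) v)
      else if a = 1 \<and> b \<ge> 2 then unitv (BI b)
      else (\<lambda>_. 0))"
| "sc (BR a) (BR b) = (if a = 1 \<and> b \<ge> 2 then unitv (BR b) else (\<lambda>_. 0))"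
| "sc (Ee a) (Ff b) =
     (if a = b then (if a = 0 then unitv Zz else (\<lambda>v. - unitv Zz v)) else (\<lambda>_. 0))"
| "sc (BR a) (Ee k) = mixE (BR a) k"
| "sc (BI a) (Ee k) = mixE (BI a) k"
| "sc (BR a) (Ff k) = mixF (BR a) k"
| "sc (BI a) (Ff k) = mixF (BI a) k"
| "sc _ _ = (\<lambda>_. 0)"

definition bb :: "idx \<Rightarrow> idx \<Rightarrow> idx \<Rightarrow> real" where
  "bb i j = (\<lambda>v. sc i j v - sc j i v)"

definition lbr :: "nat \<Rightarrow> (idx \<Rightarrow> real) \<Rightarrow> (idx \<Rightarrow> real) \<Rightarrow> idx \<Rightarrow> real" where
  "lbr n x y = (\<lambda>v. \<Sum>i\<in>lbasis n. \<Sum>j\<in>lbasis n. x i * y j * bb i j v)"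

fun gram :: "real \<Rightarrow> real \<Rightarrow> idx \<Rightarrow> idx \<Rightarrow> real" where
  "gram \<rho> c (BR a) (BR b) =
     (if a \<noteq> b then 0 else if a = 1 then (\<rho> + c) / \<rho> else (\<rho> + c) / (4 * \<rho>))"
| "gram \<rho> c (BI a) (BI b) =
     (if a \<noteq> b then 0 else if a = 1 then (\<rho> + c) ^ 3 / (\<rho> ^ 2 * (\<rho> + 2 * c))
      else (\<rho> + c) / (4 * \<rho>))"
| "gram \<rho> c (Ee a) (Ee b) =
     (if a \<noteq> b then 0 else if a = 0 then (\<rho> + 2 * c) / (4 * \<rho> ^ 2) else 1 / (4 * \<rho>))"
| "gram \<rho> c (Ff a) (Ff b) =
     (if a \<noteq> b then 0 else if a = 0 then (\<rho> + 2 * c) / (4 * \<rho> ^ 2) else 1 / (4 * \<rho>))"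
| "gram \<rho> c Zz Zz = (\<rho> + c) / (4 * \<rho> ^ 2 * (\<rho> + 2 * c))"
| "gram \<rho> c (BI a) Zz = (if a = 1 then - (c * (\<rho> + c)) / (2 * \<rho> ^ 2 * (\<rho> + 2 * c)) else 0)"
| "gram \<rho> c Zz (BI a) = (if a = 1 then - (c * (\<rho> + c)) / (2 * \<rho> ^ 2 * (\<rho> + 2 * c)) else 0)"
| "gram \<rho> c _ _ = 0"

definition gmet :: "nat \<Rightarrow> real \<Rightarrow> real \<Rightarrow> (idx \<Rightarrow> real) \<Rightarrow> (idx \<Rightarrow> real) \<Rightarrow> real" where
  "gmet n \<rho> c x y = (\<Sum>i\<in>lbasis n. \<Sum>j\<in>lbasis n. x i * y j * gram \<rho> c i j)"

definition nabla :: "nat \<Rightarrow> real \<Rightarrow> real \<Rightarrow> (idx \<Rightarrow> real) \<Rightarrow> (idx \<Rightarrow> real) \<Rightarrow> idx \<Rightarrow> real" where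
  "nabla n \<rho> c x y = (THE w. w \<in> lvec n \<and> (\<forall>z\<in>lvec n.
      2 * gmet n \<rho> c w z = gmet n \<rho> c (lbr n x y) z - gmet n \<rho> c (lbr n y z) x
                            + gmet n \<rho> c (lbr n z x) y))"

definition riem :: "nat \<Rightarrow> real \<Rightarrow> real \<Rightarrow> (idx \<Rightarrow> real) \<Rightarrow> (idx \<Rightarrow> real) \<Rightarrow> (idx \<Rightarrow> real) \<Rightarrow> idx \<Rightarrow> real" where
  "riem n \<rho> c x y z = (\<lambda>v. nabla n \<rho> c x (nabla n \<rho> c y z) v - nabla n \<rho> c y (nabla n \<rho> c x z) v
                           - nabla n \<rho> c (lbr n x y) z v)"

definition ricci :: "nat \<Rightarrow> real \<Rightarrow> real \<Rightarrow> (idx \<Rightarrow> real) \<Rightarrow> (idx \<Rightarrow> real) \<Rightarrow> real" where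
  "ricci n \<rho> c y z = (\<Sum>i\<in>lbasis n. riem n \<rho> c (unitv i) y z i)"

definition ricop :: "nat \<Rightarrow> real \<Rightarrow> real \<Rightarrow> (idx \<Rightarrow> real) \<Rightarrow> idx \<Rightarrow> real" where
  "ricop n \<rho> c y = (THE w. w \<in> lvec n \<and> (\<forall>z\<in>lvec n. gmet n \<rho> c w z = ricci n \<rho> c y z))"

definition is_derivation :: "nat \<Rightarrow> ((idx \<Rightarrow> real) \<Rightarrow> idx \<Rightarrow> real) \<Rightarrow> bool" where
  "is_derivation n D \<longleftrightarrow>
     (\<forall>x\<in>lvec n. D x \<in> lvec n) \<and>
     (\<forall>x\<in>lvec n. \<forall>y\<in>lvec n. \<forall>a b :: real.
        D (\<lambda>v. a * x v + b * y v) = (\<lambda>v. a * D x v + b * D y v)) \<and>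
     (\<forall>x\<in>lvec n. \<forall>y\<in>lvec n. D (lbr n x y) = (\<lambda>v. lbr n (D x) y v + lbr n x (D y) v))"

end

theory Submission
  imports Defs
begin


lemma lbasis_eq: "lbasis n = {Zz} \<union> BR ` {1..n-1} \<union> BI ` {1..n-1} \<union> Ee ` {..<n} \<union> Ff ` {..<n}"
  unfolding lbasis_def by auto

lemma fin_lbasis[simp]: "finite (lbasis n)"
  unfolding lbasis_eq by auto

lemma s2: "sum (g::nat\<Rightarrow>real) {..<Suc (Suc m)} = g 0 + g 1 + (\<Sum>a<m. g (Suc (Suc a)))"
  unfolding sum.lessThan_Suc_shift by simp

lemma s1: "sum (g::nat\<Rightarrow>real) {1..Suc m} = g 1 + (\<Sum>a<m. g (Suc (Suc a)))"
proof -
  have "sum g {1..Suc m} = sum (\<lambda>i. g (Suc i)) {0..m}"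
    using sum.shift_bounds_cl_Suc_ivl[of g 0 m] by simp
  also have "{0..m} = {..<Suc m}" by auto
  finally show ?thesis unfolding sum.lessThan_Suc_shift by simp
qed

lemma sum_lbasis:
  fixes f :: "idx \<Rightarrow> real"
  shows "sum f (lbasis (Suc (Suc m))) = f (BR 1) + f (BI 1) + f (Ee 0) + f (Ff 0) + f (Ee 1) + f (Ff 1) + f Zz
     + (\<Sum>a<m. f (BR (Suc (Suc a))) + f (BI (Suc (Suc a))) + f (Ee (Suc (Suc a))) + f (Ff (Suc (Suc a))))"
proof -
  have i: "inj_on BR A" "inj_on BI A" "inj_on Ee A" "inj_on Ff A" for A by (auto simp: inj_on_def)
  have eq: "sum f (lbasis (Suc (Suc m))) = f Zz + sum (f o BR) {1..Suc m} + sum (f o BI) {1..Suc m}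
      + sum (f o Ee) {..<Suc (Suc m)} + sum (f o Ff) {..<Suc (Suc m)}"
    unfolding lbasis_eq
    apply (subst sum.union_disjoint, force, force, force)+
    by (simp only: sum.reindex[OF i(1)] sum.reindex[OF i(2)] sum.reindex[OF i(3)] sum.reindex[OF i(4)] sum.insert_if sum.empty) simp
  show ?thesis unfolding eq s1 s2 by (simp add: sum.distrib)
qed

definition G :: "real \<Rightarrow> idx \<Rightarrow> real" where "G \<rho> i = gram \<rho> 0 i i"
definition Gam :: "real \<Rightarrow> idx \<Rightarrow> idx \<Rightarrow> idx \<Rightarrow> real" where
 "Gam \<rho> i j k = (G \<rho> k * bb i j k - G \<rho> i * bb j k i + G \<rho> j * bb k i j) / (2 * G \<rho> k)"

lemma G_simps: assumes "\<rho> > 0" shows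
  "G \<rho> (BR a) = (if a = 1 then 1 else 1/4)"
  "G \<rho> (BI a) = (if a = 1 then 1 else 1/4)"
  "G \<rho> (Ee a) = 1/(4*\<rho>)"
  "G \<rho> (Ff a) = 1/(4*\<rho>)"
  "G \<rho> Zz = 1/(4*\<rho>^2)"
  using assms by (auto simp: G_def power2_eq_square power3_eq_cube)



lemma if_app: "(if P then f else g) x = (if P then f x else g x)" by simp
lemma ss1[simp]: "Suc (Suc a) \<noteq> 1" "1 \<noteq> Suc (Suc a)" by auto

definition T :: "real \<Rightarrow> idx \<Rightarrow> idx \<Rightarrow> idx \<Rightarrow> idx \<Rightarrow> real" where
 "T \<rho> p q i j = Gam \<rho> p q j * Gam \<rho> i j i - Gam \<rho> i q j * Gam \<rho> p j i - bb i p j * Gam \<rho> j q i"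

definition sF0 :: "(idx \<Rightarrow> real) \<Rightarrow> real" where
 "sF0 f = f (BR 1) + f (BI 1) + f (Ee 0) + f (Ff 0) + f (Ee 1) + f (Ff 1) + f Zz"
definition sB :: "nat \<Rightarrow> (idx \<Rightarrow> real) \<Rightarrow> real" where
 "sB a f = f (BR (Suc (Suc a))) + f (BI (Suc (Suc a))) + f (Ee (Suc (Suc a))) + f (Ff (Suc (Suc a)))"

definition X :: "real \<Rightarrow> idx \<Rightarrow> idx \<Rightarrow> nat \<Rightarrow> real" where
 "X \<rho> p q a = sF0 (\<lambda>i. sB a (\<lambda>j. T \<rho> p q i j)) + sB a (\<lambda>i. sF0 (\<lambda>j. T \<rho> p q i j)) + sB a (\<lambda>i. sB a (\<lambda>j. T \<rho> p q i j))"

lemmas evs = T_def Gam_def G_simps bb_def mixE_def mixF_def unitv_def if_app sF0_def sB_def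



lemma sum_lbasis2: "sum f (lbasis (Suc (Suc m))) = sF0 f + (\<Sum>a<m. sB a f)"
  unfolding sum_lbasis sF0_def sB_def by simp

lemma sF0_add: "sF0 (\<lambda>i. f i + g i) = sF0 f + sF0 g" unfolding sF0_def by simp
lemma sB_add: "sB a (\<lambda>i. f i + g i) = sB a f + sB a g" unfolding sB_def by simp
lemma sF0_sum: "sF0 (\<lambda>i. \<Sum>b\<in>A. h i b) = (\<Sum>b\<in>A. sF0 (\<lambda>i. h i b))" unfolding sF0_def by (simp add: sum.distrib)
lemma sB_sum: "sB a (\<lambda>i. \<Sum>b\<in>A. h i b) = (\<Sum>b\<in>A. sB a (\<lambda>i. h i b))" unfolding sB_def by (simp add: sum.distrib)

definition chi :: "nat \<Rightarrow> idx \<Rightarrow> bool" where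
 "chi c x \<longleftrightarrow> x = BR (Suc (Suc c)) \<or> x = BI (Suc (Suc c)) \<or> x = Ee (Suc (Suc c)) \<or> x = Ff (Suc (Suc c))"

lemma sB_zero: "(\<And>i. chi a i \<Longrightarrow> f i = 0) \<Longrightarrow> sB a f = 0" unfolding sB_def chi_def by simp

lemma alpha_BR_nz: "alpha (BR a) k j \<noteq> 0 \<Longrightarrow> (a = 1 \<and> ((k=0\<and>j=1) \<or> (k=1\<and>j=0))) \<or> (a \<noteq> 1 \<and> ((k \<le> 1 \<and> j = a) \<or> (k = a \<and> j \<le> 1)))"
  by (auto split: if_splits)
lemma alpha_BI_nz: "alpha (BI a) k j \<noteq> 0 \<Longrightarrow> (a = 1 \<and> k \<le> 1 \<and> j \<le> 1) \<or> (a \<noteq> 1 \<and> ((k \<le> 1 \<and> j = a) \<or> (k = a \<and> j \<le> 1)))"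
  by (auto split: if_splits)
lemma alpha_nz: "(\<exists>a. B = BR a \<or> B = BI a) \<and> (chi c B = (chi c (Ee k) \<noteq> chi c (Ee j)))" if "alpha B k j \<noteq> 0"
proof (cases B)
  case (BR a) then show ?thesis using alpha_BR_nz[of a k j] that by (auto simp: chi_def)
next
  case (BI a) then show ?thesis using alpha_BI_nz[of a k j] that by (auto simp: chi_def)
qed (use that in auto)

lemma chiF: "chi c (Ff k) = chi c (Ee k)" by (simp add: chi_def)

lemma mixE_nz: assumes "mixE B k v \<noteq> 0" shows "chi c B = (chi c (Ee k) \<noteq> chi c v)"
proof (cases v)
  case (Ee x) with assms have "alpha B k x \<noteq> 0" by (auto simp: mixE_def)
  then show ?thesis using alpha_nz[of B k x c] Ee by auto
next
  case (Ff x) with assms have "alpha B k x \<noteq> 0" by (auto simp: mixE_def)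
  then show ?thesis using alpha_nz[of B k x c] Ff by (auto simp: chiF)
qed (use assms in \<open>auto simp: mixE_def\<close>)
lemma mixF_nz: assumes "mixF B k v \<noteq> 0" shows "chi c B = (chi c (Ee k) \<noteq> chi c v)"
proof (cases v)
  case (Ee x) with assms have "alpha B k x \<noteq> 0" by (auto simp: mixF_def)
  then show ?thesis using alpha_nz[of B k x c] Ee by auto
next
  case (Ff x) with assms have "alpha B k x \<noteq> 0" by (auto simp: mixF_def)
  then show ?thesis using alpha_nz[of B k x c] Ff by (auto simp: chiF)
qed (use assms in \<open>auto simp: mixF_def\<close>)

lemma sc_par: assumes "sc i j k \<noteq> 0" shows "chi c i = (chi c j \<noteq> chi c k)"
proof (cases i)
  case (BR a) note i = this
  show ?thesis
  proof (cases j)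
    case (BR b) with assms i show ?thesis by (auto simp: unitv_def chi_def split: if_splits)
  next
    case (BI b) with assms i show ?thesis by (auto simp: unitv_def chi_def split: if_splits)
  next
    case (Ee b) with assms i show ?thesis using mixE_nz[of "BR a" b k c] by auto
  next
    case (Ff b) with assms i show ?thesis using mixF_nz[of "BR a" b k c] by (auto simp: chiF)
  qed (use assms i in auto)
next
  case (BI a) note i = this
  show ?thesis
  proof (cases j)
    case (Ee b) with assms i show ?thesis using mixE_nz[of "BI a" b k c] by auto
  next
    case (Ff b) with assms i show ?thesis using mixF_nz[of "BI a" b k c] by (auto simp: chiF)
  qed (use assms i in auto)
next
  case (Ee a) note i = this
  show ?thesis
  proof (cases j)
    case (Ff b) with assms i show ?thesis by (auto simp: unitv_def chi_def split: if_splits)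
  qed (use assms i in auto)
qed (use assms in auto)

lemma bb_par: "bb i j k \<noteq> 0 \<Longrightarrow> chi c i = (chi c j \<noteq> chi c k)"
  unfolding bb_def using sc_par[of i j k c] sc_par[of j i k c] by fastforce

lemma Gam_par: "Gam \<rho> i j k \<noteq> 0 \<Longrightarrow> chi c i = (chi c j \<noteq> chi c k)"
proof -
  assume "Gam \<rho> i j k \<noteq> 0"
  then have "bb i j k \<noteq> 0 \<or> bb j k i \<noteq> 0 \<or> bb k i j \<noteq> 0" unfolding Gam_def by auto
  then show ?thesis using bb_par[of i j k c] bb_par[of j k i c] bb_par[of k i j c] by blast
qed

lemma T_par: "T \<rho> p q i j \<noteq> 0 \<Longrightarrow> chi c p = chi c q"
proof -
  assume "T \<rho> p q i j \<noteq> 0"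
  then have "(Gam \<rho> p q j \<noteq> 0 \<and> Gam \<rho> i j i \<noteq> 0) \<or> (Gam \<rho> i q j \<noteq> 0 \<and> Gam \<rho> p j i \<noteq> 0) \<or> (bb i p j \<noteq> 0 \<and> Gam \<rho> j q i \<noteq> 0)"
    unfolding T_def by auto
  then show ?thesis
    using Gam_par[of \<rho> p q j c] Gam_par[of \<rho> i j i c] Gam_par[of \<rho> i q j c] Gam_par[of \<rho> p j i c]
      bb_par[of i p j c] Gam_par[of \<rho> j q i c] by blast
qed

lemma chi_uniq: "chi a x \<Longrightarrow> chi b x \<Longrightarrow> a = b" by (auto simp: chi_def)

lemma offdiag: assumes "a \<noteq> b" "chi a i" "chi b j" shows "T \<rho> p q i j = 0"
proof (rule ccontr)
  assume "T \<rho> p q i j \<noteq> 0"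
  then have "(Gam \<rho> p q j \<noteq> 0 \<and> Gam \<rho> i j i \<noteq> 0) \<or> (Gam \<rho> i q j \<noteq> 0 \<and> Gam \<rho> p j i \<noteq> 0) \<or> (bb i p j \<noteq> 0 \<and> Gam \<rho> j q i \<noteq> 0)"
    unfolding T_def by auto
  moreover have nb: "\<not> chi b i" "\<not> chi a j" using assms chi_uniq by blast+
  ultimately show False
    using Gam_par[of \<rho> i j i b] Gam_par[of \<rho> i q j a] Gam_par[of \<rho> i q j b] bb_par[of i p j a] bb_par[of i p j b]
      chi_uniq[of a q b] chi_uniq[of a p b] assms by blast
qed

definition Ric :: "nat \<Rightarrow> real \<Rightarrow> idx \<Rightarrow> idx \<Rightarrow> real" where
 "Ric n \<rho> p q = (\<Sum>i\<in>lbasis n. \<Sum>j\<in>lbasis n. T \<rho> p q i j)"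

lemma Ric_par: "chi c p \<noteq> chi c q \<Longrightarrow> Ric n \<rho> p q = 0"
  unfolding Ric_def using T_par[of \<rho> p q _ _ c] by (metis (mono_tags) sum.neutral)

lemma Ric_decomp: "Ric (Suc (Suc m)) \<rho> p q = sF0 (\<lambda>i. sF0 (\<lambda>j. T \<rho> p q i j)) + (\<Sum>a<m. X \<rho> p q a)"
proof -
  have od: "(\<Sum>b<m. sB a (\<lambda>i. sB b (\<lambda>j. T \<rho> p q i j))) = sB a (\<lambda>i. sB a (\<lambda>j. T \<rho> p q i j))" if "a < m" for a
  proof -
    have "(\<Sum>b<m. sB a (\<lambda>i. sB b (\<lambda>j. T \<rho> p q i j))) = (\<Sum>b<m. if b = a then sB a (\<lambda>i. sB a (\<lambda>j. T \<rho> p q i j)) else 0)"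
      apply (rule sum.cong, simp)
      apply (auto intro!: sB_zero)
      by (rule offdiag; auto)
    then show ?thesis using that by simp
  qed
  have "Ric (Suc (Suc m)) \<rho> p q = sF0 (\<lambda>i. sF0 (\<lambda>j. T \<rho> p q i j)) + (\<Sum>b<m. sF0 (\<lambda>i. sB b (\<lambda>j. T \<rho> p q i j)))
     + ((\<Sum>a<m. sB a (\<lambda>i. sF0 (\<lambda>j. T \<rho> p q i j))) + (\<Sum>a<m. \<Sum>b<m. sB a (\<lambda>i. sB b (\<lambda>j. T \<rho> p q i j))))"
    unfolding Ric_def sum_lbasis2 sF0_add sB_add sF0_sum sB_sum sum.distrib by simp
  also have "(\<Sum>a<m. \<Sum>b<m. sB a (\<lambda>i. sB b (\<lambda>j. T \<rho> p q i j))) = (\<Sum>a<m. sB a (\<lambda>i. sB a (\<lambda>j. T \<rho> p q i j)))"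
    by (rule sum.cong) (auto simp: od)
  finally show ?thesis unfolding X_def sum.distrib by simp
qed

definition F0 :: "idx set" where "F0 = {BR 1, BI 1, Ee 0, Ff 0, Ee 1, Ff 1, Zz}"
definition Rv :: "nat \<Rightarrow> idx \<Rightarrow> real" where
 "Rv n i = (case i of BR _ \<Rightarrow> - 2 * (real n + 2) | BI _ \<Rightarrow> - 2 * (real n + 2) | Ee _ \<Rightarrow> -2 | Ff _ \<Rightarrow> -2 | Zz \<Rightarrow> 2 * real n)"

lemma X_F0_const: "\<rho> > 0 \<Longrightarrow> p \<in> F0 \<Longrightarrow> q \<in> F0 \<Longrightarrow> X \<rho> p q a = X \<rho> p q 0"
  apply (simp only: F0_def insert_iff empty_iff simp_thms)
  apply (elim disjE)
  apply (simp_all add: evs X_def)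
  done

lemma S00_F0: "\<rho> > 0 \<Longrightarrow> p \<in> F0 \<Longrightarrow> q \<in> F0 \<Longrightarrow>
   sF0 (\<lambda>i. sF0 (\<lambda>j. T \<rho> p q i j)) + real m * X \<rho> p q 0 = (if p = q then Rv (m+2) p * G \<rho> p else 0)"
  apply (simp only: F0_def insert_iff empty_iff simp_thms)
  apply (elim disjE)
  apply (simp_all add: evs X_def Rv_def field_simps)
  apply (simp_all add: algebra_simps power2_eq_square eval_nat_numeral)
  done

definition Bs :: "nat \<Rightarrow> idx set" where "Bs c = {BR (Suc (Suc c)), BI (Suc (Suc c)), Ee (Suc (Suc c)), Ff (Suc (Suc c))}"

lemma X_blk_const: "\<rho> > 0 \<Longrightarrow> p \<in> Bs c \<Longrightarrow> q \<in> Bs c \<Longrightarrow> a \<noteq> c \<Longrightarrow> X \<rho> p q a = X \<rho> p q (Suc c)"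
  apply (simp only: Bs_def insert_iff empty_iff simp_thms)
  apply (elim disjE)
  apply (simp_all add: evs X_def)
  done

lemma S_blk: "\<rho> > 0 \<Longrightarrow> p \<in> Bs c \<Longrightarrow> q \<in> Bs c \<Longrightarrow>
   sF0 (\<lambda>i. sF0 (\<lambda>j. T \<rho> p q i j)) + X \<rho> p q c + (real m - 1) * X \<rho> p q (Suc c) = (if p = q then Rv (m+2) p * G \<rho> p else 0)"
  apply (simp only: Bs_def insert_iff empty_iff simp_thms)
  apply (elim disjE)
  apply (simp_all add: evs X_def Rv_def field_simps)
  apply (simp_all add: algebra_simps power2_eq_square eval_nat_numeral)
  done
lemma G_pos: "\<rho> > 0 \<Longrightarrow> G \<rho> i > 0"
  by (cases i) (auto simp: G_simps)

lemma gram0: "gram \<rho> 0 i j = (if i = j then G \<rho> i else 0)"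
  unfolding G_def by (cases i; cases j) auto

lemma gmet0: "gmet n \<rho> 0 x y = (\<Sum>i\<in>lbasis n. x i * y i * G \<rho> i)"
  unfolding gmet_def
proof (rule sum.cong[OF refl])
  fix i assume i: "i \<in> lbasis n"
  have "(\<Sum>j\<in>lbasis n. x i * y j * gram \<rho> 0 i j) = (\<Sum>j\<in>lbasis n. if i = j then x i * y j * G \<rho> i else 0)"
    by (rule sum.cong) (auto simp: gram0)
  also have "\<dots> = x i * y i * G \<rho> i" using i by simp
  finally show "(\<Sum>j\<in>lbasis n. x i * y j * gram \<rho> 0 i j) = x i * y i * G \<rho> i" .
qed

lemma gmet_unit: "k \<in> lbasis n \<Longrightarrow> gmet n \<rho> 0 w (unitv k) = w k * G \<rho> k"
proof -
  assume k: "k \<in> lbasis n"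
  have "gmet n \<rho> 0 w (unitv k) = (\<Sum>i\<in>lbasis n. if i = k then w k * G \<rho> k else 0)"
    unfolding gmet0 unitv_def by (rule sum.cong) auto
  then show ?thesis using k by simp
qed

lemma unitv_lvec: "k \<in> lbasis n \<Longrightarrow> unitv k \<in> lvec n"
  unfolding lvec_def unitv_def by auto

definition NB :: "nat \<Rightarrow> real \<Rightarrow> (idx \<Rightarrow> real) \<Rightarrow> (idx \<Rightarrow> real) \<Rightarrow> idx \<Rightarrow> real" where
  "NB n \<rho> x y = (\<lambda>k. if k \<in> lbasis n then \<Sum>i\<in>lbasis n. \<Sum>j\<in>lbasis n. x i * y j * Gam \<rho> i j k else 0)"

lemma swap3: "(\<Sum>i\<in>A. \<Sum>j\<in>B. \<Sum>k\<in>C. f i j k) = (\<Sum>k\<in>C. \<Sum>i\<in>A. \<Sum>j\<in>B. f i j k)"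
proof -
  have "(\<Sum>i\<in>A. \<Sum>j\<in>B. \<Sum>k\<in>C. f i j k) = (\<Sum>i\<in>A. \<Sum>k\<in>C. \<Sum>j\<in>B. f i j k)"
    by (rule sum.cong[OF refl], rule sum.swap)
  also have "\<dots> = (\<Sum>k\<in>C. \<Sum>i\<in>A. \<Sum>j\<in>B. f i j k)" by (rule sum.swap)
  finally show ?thesis .
qed

lemma koszul:
  assumes "\<rho> > 0"
  shows "2 * gmet n \<rho> 0 (NB n \<rho> x y) z = gmet n \<rho> 0 (lbr n x y) z - gmet n \<rho> 0 (lbr n y z) x + gmet n \<rho> 0 (lbr n z x) y"
proof -
  let ?A = "lbasis n"
  let ?f1 = "\<lambda>i j k. x i * y j * z k * (G \<rho> k * bb i j k)"
  let ?f2 = "\<lambda>i j k. x i * y j * z k * (G \<rho> i * bb j k i)"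
  let ?f3 = "\<lambda>i j k. x i * y j * z k * (G \<rho> j * bb k i j)"
  have L: "2 * gmet n \<rho> 0 (NB n \<rho> x y) z = (\<Sum>k\<in>?A. \<Sum>i\<in>?A. \<Sum>j\<in>?A. ?f1 i j k - ?f2 i j k + ?f3 i j k)"
    unfolding gmet0 NB_def sum_distrib_left
  proof (rule sum.cong[OF refl])
    fix k assume k: "k \<in> ?A"
    have Gk: "G \<rho> k \<noteq> 0" using G_pos[OF assms] by (metis less_irrefl)
    show "2 * ((if k \<in> ?A then \<Sum>i\<in>?A. \<Sum>j\<in>?A. x i * y j * Gam \<rho> i j k else 0) * z k * G \<rho> k) =
        (\<Sum>i\<in>?A. \<Sum>j\<in>?A. ?f1 i j k - ?f2 i j k + ?f3 i j k)"
    proof -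
      have "2 * ((if k \<in> ?A then \<Sum>i\<in>?A. \<Sum>j\<in>?A. x i * y j * Gam \<rho> i j k else 0) * z k * G \<rho> k)
          = (\<Sum>i\<in>?A. \<Sum>j\<in>?A. 2 * (x i * y j * Gam \<rho> i j k) * z k * G \<rho> k)"
        using k by (simp add: sum_distrib_left sum_distrib_right mult_ac)
      also have "\<dots> = (\<Sum>i\<in>?A. \<Sum>j\<in>?A. ?f1 i j k - ?f2 i j k + ?f3 i j k)"
        by (intro sum.cong refl) (simp add: Gam_def field_simps Gk)
      finally show ?thesis .
    qed
  qed
  have R1: "gmet n \<rho> 0 (lbr n x y) z = (\<Sum>k\<in>?A. \<Sum>i\<in>?A. \<Sum>j\<in>?A. ?f1 i j k)"
    unfolding gmet0 lbr_def sum_distrib_right by (intro sum.cong refl) (simp add: mult_ac)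
  have R2: "gmet n \<rho> 0 (lbr n y z) x = (\<Sum>k\<in>?A. \<Sum>i\<in>?A. \<Sum>j\<in>?A. ?f2 i j k)"
  proof -
    have "gmet n \<rho> 0 (lbr n y z) x = (\<Sum>i\<in>?A. \<Sum>j\<in>?A. \<Sum>k\<in>?A. ?f2 i j k)"
      unfolding gmet0 lbr_def sum_distrib_right by (intro sum.cong refl) (simp add: mult_ac)
    also have "\<dots> = (\<Sum>k\<in>?A. \<Sum>i\<in>?A. \<Sum>j\<in>?A. ?f2 i j k)" by (rule swap3)
    finally show ?thesis .
  qed
  have R3: "gmet n \<rho> 0 (lbr n z x) y = (\<Sum>k\<in>?A. \<Sum>i\<in>?A. \<Sum>j\<in>?A. ?f3 i j k)"
  proof -
    have "gmet n \<rho> 0 (lbr n z x) y = (\<Sum>j\<in>?A. \<Sum>k\<in>?A. \<Sum>i\<in>?A. ?f3 i j k)"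
      unfolding gmet0 lbr_def sum_distrib_right by (intro sum.cong refl) (simp add: mult_ac)
    also have "\<dots> = (\<Sum>i\<in>?A. \<Sum>j\<in>?A. \<Sum>k\<in>?A. ?f3 i j k)" by (rule swap3)
    also have "\<dots> = (\<Sum>k\<in>?A. \<Sum>i\<in>?A. \<Sum>j\<in>?A. ?f3 i j k)" by (rule swap3)
    finally show ?thesis .
  qed
  show ?thesis unfolding L R1 R2 R3
    by (simp add: sum.distrib sum_subtractf)
qed


lemma nabla_eq: assumes "\<rho> > 0" shows "nabla n \<rho> 0 x y = NB n \<rho> x y"
  unfolding nabla_def
proof (rule the_equality)
  show "NB n \<rho> x y \<in> lvec n \<and> (\<forall>z\<in>lvec n. 2 * gmet n \<rho> 0 (NB n \<rho> x y) z =
      gmet n \<rho> 0 (lbr n x y) z - gmet n \<rho> 0 (lbr n y z) x + gmet n \<rho> 0 (lbr n z x) y)"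
    using koszul[OF assms] by (auto simp: lvec_def NB_def)
next
  fix w assume w: "w \<in> lvec n \<and> (\<forall>z\<in>lvec n. 2 * gmet n \<rho> 0 w z =
      gmet n \<rho> 0 (lbr n x y) z - gmet n \<rho> 0 (lbr n y z) x + gmet n \<rho> 0 (lbr n z x) y)"
  show "w = NB n \<rho> x y"
  proof (rule ext)
    fix k show "w k = NB n \<rho> x y k"
    proof cases
      assume k: "k \<in> lbasis n"
      have "2 * gmet n \<rho> 0 w (unitv k) = 2 * gmet n \<rho> 0 (NB n \<rho> x y) (unitv k)"
        using w koszul[OF assms] unitv_lvec[OF k] by auto
      then have "w k * G \<rho> k = NB n \<rho> x y k * G \<rho> k" by (simp add: gmet_unit[OF k])
      then show ?thesis using G_pos[OF assms, of k] by auto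
    next
      assume "k \<notin> lbasis n" then show ?thesis using w by (simp add: lvec_def NB_def)
    qed
  qed
qed

lemma NB_unit: "i \<in> lbasis n \<Longrightarrow> NB n \<rho> (unitv i) w k = (if k \<in> lbasis n then \<Sum>j\<in>lbasis n. w j * Gam \<rho> i j k else 0)"
proof -
  assume i: "i \<in> lbasis n"
  have "(\<Sum>i'\<in>lbasis n. \<Sum>j\<in>lbasis n. unitv i i' * w j * Gam \<rho> i' j k) = (\<Sum>i'\<in>lbasis n. if i' = i then \<Sum>j\<in>lbasis n. w j * Gam \<rho> i j k else 0)"
    unfolding unitv_def by (rule sum.cong) auto
  then show ?thesis using i unfolding NB_def by simp
qed

lemma lbr_unit: "i \<in> lbasis n \<Longrightarrow> lbr n (unitv i) y j = (\<Sum>p\<in>lbasis n. y p * bb i p j)"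
proof -
  assume i: "i \<in> lbasis n"
  have "lbr n (unitv i) y j = (\<Sum>i'\<in>lbasis n. if i' = i then \<Sum>p\<in>lbasis n. y p * bb i p j else 0)"
    unfolding lbr_def unitv_def by (rule sum.cong) auto
  then show ?thesis using i by simp
qed

lemma sw4a: "(\<Sum>i\<in>A. \<Sum>j\<in>A. \<Sum>p\<in>A. \<Sum>q\<in>A. f i j p q) = (\<Sum>p\<in>A. \<Sum>q\<in>A. \<Sum>i\<in>A. \<Sum>j\<in>A. f i j p q)"
proof -
  have "(\<Sum>i\<in>A. \<Sum>j\<in>A. \<Sum>p\<in>A. \<Sum>q\<in>A. f i j p q) = (\<Sum>p\<in>A. \<Sum>i\<in>A. \<Sum>j\<in>A. \<Sum>q\<in>A. f i j p q)"
    by (rule swap3)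
  also have "\<dots> = (\<Sum>p\<in>A. \<Sum>q\<in>A. \<Sum>i\<in>A. \<Sum>j\<in>A. f i j p q)"
    by (rule sum.cong[OF refl], rule swap3)
  finally show ?thesis .
qed

lemma ricci_eq: assumes "\<rho> > 0"
  shows "ricci n \<rho> 0 y z = (\<Sum>p\<in>lbasis n. \<Sum>q\<in>lbasis n. y p * z q * Ric n \<rho> p q)"
proof -
  let ?A = "lbasis n"
  have NByz: "NB n \<rho> y z j = (\<Sum>p\<in>?A. \<Sum>q\<in>?A. y p * z q * Gam \<rho> p q j)" if "j \<in> ?A" for j
    using that by (simp add: NB_def)
  have t1: "(\<Sum>i\<in>?A. NB n \<rho> (unitv i) (NB n \<rho> y z) i) = (\<Sum>p\<in>?A. \<Sum>q\<in>?A. \<Sum>i\<in>?A. \<Sum>j\<in>?A. y p * z q * (Gam \<rho> p q j * Gam \<rho> i j i))"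
  proof -
    have "(\<Sum>i\<in>?A. NB n \<rho> (unitv i) (NB n \<rho> y z) i) = (\<Sum>i\<in>?A. \<Sum>j\<in>?A. \<Sum>p\<in>?A. \<Sum>q\<in>?A. y p * z q * (Gam \<rho> p q j * Gam \<rho> i j i))"
    proof (intro sum.cong refl)
      fix i assume i: "i \<in> ?A"
      have "NB n \<rho> (unitv i) (NB n \<rho> y z) i = (\<Sum>j\<in>?A. NB n \<rho> y z j * Gam \<rho> i j i)" using i by (simp add: NB_unit)
      also have "\<dots> = (\<Sum>j\<in>?A. \<Sum>p\<in>?A. \<Sum>q\<in>?A. y p * z q * (Gam \<rho> p q j * Gam \<rho> i j i))"
        by (intro sum.cong refl) (simp add: NByz sum_distrib_right mult.assoc)
      finally show "NB n \<rho> (unitv i) (NB n \<rho> y z) i = (\<Sum>j\<in>?A. \<Sum>p\<in>?A. \<Sum>q\<in>?A. y p * z q * (Gam \<rho> p q j * Gam \<rho> i j i))" .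
    qed
    also have "\<dots> = (\<Sum>p\<in>?A. \<Sum>q\<in>?A. \<Sum>i\<in>?A. \<Sum>j\<in>?A. y p * z q * (Gam \<rho> p q j * Gam \<rho> i j i))" by (rule sw4a)
    finally show ?thesis .
  qed
  have t2: "(\<Sum>i\<in>?A. NB n \<rho> y (NB n \<rho> (unitv i) z) i) = (\<Sum>p\<in>?A. \<Sum>q\<in>?A. \<Sum>i\<in>?A. \<Sum>j\<in>?A. y p * z q * (Gam \<rho> i q j * Gam \<rho> p j i))"
  proof -
    have "(\<Sum>i\<in>?A. NB n \<rho> y (NB n \<rho> (unitv i) z) i) = (\<Sum>i\<in>?A. \<Sum>p\<in>?A. \<Sum>j\<in>?A. \<Sum>q\<in>?A. y p * z q * (Gam \<rho> i q j * Gam \<rho> p j i))"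
    proof (intro sum.cong refl)
      fix i assume i: "i \<in> ?A"
      show "NB n \<rho> y (NB n \<rho> (unitv i) z) i = (\<Sum>p\<in>?A. \<Sum>j\<in>?A. \<Sum>q\<in>?A. y p * z q * (Gam \<rho> i q j * Gam \<rho> p j i))"
        unfolding NB_def[of n \<rho> y] using i
        by (simp add: NB_unit sum_distrib_left sum_distrib_right mult_ac cong: sum.cong)
    qed
    also have "\<dots> = (\<Sum>p\<in>?A. \<Sum>i\<in>?A. \<Sum>j\<in>?A. \<Sum>q\<in>?A. y p * z q * (Gam \<rho> i q j * Gam \<rho> p j i))"
      by (rule sum.swap)
    also have "\<dots> = (\<Sum>p\<in>?A. \<Sum>q\<in>?A. \<Sum>i\<in>?A. \<Sum>j\<in>?A. y p * z q * (Gam \<rho> i q j * Gam \<rho> p j i))"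
      by (rule sum.cong[OF refl], rule swap3)
    finally show ?thesis .
  qed
  have t3: "(\<Sum>i\<in>?A. NB n \<rho> (lbr n (unitv i) y) z i) = (\<Sum>p\<in>?A. \<Sum>q\<in>?A. \<Sum>i\<in>?A. \<Sum>j\<in>?A. y p * z q * (bb i p j * Gam \<rho> j q i))"
  proof -
    have "(\<Sum>i\<in>?A. NB n \<rho> (lbr n (unitv i) y) z i) = (\<Sum>i\<in>?A. \<Sum>j\<in>?A. \<Sum>q\<in>?A. \<Sum>p\<in>?A. y p * z q * (bb i p j * Gam \<rho> j q i))"
    proof (intro sum.cong refl)
      fix i assume i: "i \<in> ?A"
      show "NB n \<rho> (lbr n (unitv i) y) z i = (\<Sum>j\<in>?A. \<Sum>q\<in>?A. \<Sum>p\<in>?A. y p * z q * (bb i p j * Gam \<rho> j q i))"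
        unfolding NB_def using i
        by (simp add: lbr_unit sum_distrib_left sum_distrib_right mult_ac)
    qed
    also have "\<dots> = (\<Sum>i\<in>?A. \<Sum>j\<in>?A. \<Sum>p\<in>?A. \<Sum>q\<in>?A. y p * z q * (bb i p j * Gam \<rho> j q i))"
      by (rule sum.cong[OF refl], rule sum.cong[OF refl], rule sum.swap)
    also have "\<dots> = (\<Sum>p\<in>?A. \<Sum>q\<in>?A. \<Sum>i\<in>?A. \<Sum>j\<in>?A. y p * z q * (bb i p j * Gam \<rho> j q i))" by (rule sw4a)
    finally show ?thesis .
  qed
  have "ricci n \<rho> 0 y z = (\<Sum>i\<in>?A. NB n \<rho> (unitv i) (NB n \<rho> y z) i - NB n \<rho> y (NB n \<rho> (unitv i) z) i - NB n \<rho> (lbr n (unitv i) y) z i)"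
    unfolding ricci_def riem_def nabla_eq[OF assms] ..
  also have "\<dots> = (\<Sum>p\<in>?A. \<Sum>q\<in>?A. \<Sum>i\<in>?A. \<Sum>j\<in>?A. y p * z q * T \<rho> p q i j)"
  proof -
    have "(\<Sum>i\<in>?A. NB n \<rho> (unitv i) (NB n \<rho> y z) i - NB n \<rho> y (NB n \<rho> (unitv i) z) i - NB n \<rho> (lbr n (unitv i) y) z i)
      = (\<Sum>p\<in>?A. \<Sum>q\<in>?A. \<Sum>i\<in>?A. \<Sum>j\<in>?A. y p * z q * (Gam \<rho> p q j * Gam \<rho> i j i))
       - (\<Sum>p\<in>?A. \<Sum>q\<in>?A. \<Sum>i\<in>?A. \<Sum>j\<in>?A. y p * z q * (Gam \<rho> i q j * Gam \<rho> p j i))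
       - (\<Sum>p\<in>?A. \<Sum>q\<in>?A. \<Sum>i\<in>?A. \<Sum>j\<in>?A. y p * z q * (bb i p j * Gam \<rho> j q i))"
      unfolding sum_subtractf t1 t2 t3 ..
    also have "\<dots> = (\<Sum>p\<in>?A. \<Sum>q\<in>?A. \<Sum>i\<in>?A. \<Sum>j\<in>?A. y p * z q * T \<rho> p q i j)"
      by (simp only: T_def right_diff_distrib sum_subtractf)
    finally show ?thesis .
  qed
  also have "\<dots> = (\<Sum>p\<in>?A. \<Sum>q\<in>?A. y p * z q * Ric n \<rho> p q)"
    unfolding Ric_def sum_distrib_left ..
  finally show ?thesis .
qed


lemma ricop_eq:
  assumes rho: "\<rho> > 0" and RV: "\<And>p q. p \<in> lbasis n \<Longrightarrow> q \<in> lbasis n \<Longrightarrow> Ric n \<rho> p q = (if p = q then R p * G \<rho> p else 0)"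
    and x: "x \<in> lvec n"
  shows "ricop n \<rho> 0 x = (\<lambda>v. R v * x v)"
proof -
  let ?A = "lbasis n"
  have ric: "ricci n \<rho> 0 x z = gmet n \<rho> 0 (\<lambda>v. R v * x v) z" for z
  proof -
    have "ricci n \<rho> 0 x z = (\<Sum>p\<in>?A. \<Sum>q\<in>?A. if q = p then x p * z p * (R p * G \<rho> p) else 0)"
      unfolding ricci_eq[OF rho] by (intro sum.cong refl) (auto simp: RV)
    also have "\<dots> = (\<Sum>p\<in>?A. x p * z p * (R p * G \<rho> p))" by simp
    also have "\<dots> = gmet n \<rho> 0 (\<lambda>v. R v * x v) z" unfolding gmet0 by (simp add: mult_ac)
    finally show ?thesis .
  qed
  show ?thesis unfolding ricop_def
  proof (rule the_equality)
    show "(\<lambda>v. R v * x v) \<in> lvec n \<and> (\<forall>z\<in>lvec n. gmet n \<rho> 0 (\<lambda>v. R v * x v) z = ricci n \<rho> 0 x z)"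
      using x by (auto simp: lvec_def ric)
  next
    fix w assume w: "w \<in> lvec n \<and> (\<forall>z\<in>lvec n. gmet n \<rho> 0 w z = ricci n \<rho> 0 x z)"
    show "w = (\<lambda>v. R v * x v)"
    proof (rule ext)
      fix k show "w k = R k * x k"
      proof cases
        assume k: "k \<in> ?A"
        have "gmet n \<rho> 0 w (unitv k) = gmet n \<rho> 0 (\<lambda>v. R v * x v) (unitv k)"
          using w unitv_lvec[OF k] ric by auto
        then have "w k * G \<rho> k = R k * x k * G \<rho> k" by (simp add: gmet_unit[OF k])
        then show ?thesis using G_pos[OF rho, of k] by auto
      next
        assume "k \<notin> ?A" then show ?thesis using w x by (simp add: lvec_def)
      qed
    qed
  qed
qed

definition dd :: "nat \<Rightarrow> idx \<Rightarrow> real" where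
  "dd n v = (case v of BR _ \<Rightarrow> 0 | BI _ \<Rightarrow> 0 | Ee _ \<Rightarrow> 2 * real n + 2 | Ff _ \<Rightarrow> 2 * real n + 2 | Zz \<Rightarrow> 4 * real n + 4)"

lemma mixE_EF: "mixE B k v \<noteq> 0 \<Longrightarrow> (\<exists>j. v = Ee j \<or> v = Ff j)"
  unfolding mixE_def by (cases v) auto
lemma mixF_EF: "mixF B k v \<noteq> 0 \<Longrightarrow> (\<exists>j. v = Ee j \<or> v = Ff j)"
  unfolding mixF_def by (cases v) auto

lemma sc_grad: assumes "sc i j v \<noteq> 0" shows "dd n v = dd n i + dd n j"
proof (cases i)
  case (BR a) note i = this
  show ?thesis
  proof (cases j)
    case (BR b) with assms i show ?thesis by (auto simp: unitv_def dd_def split: if_splits)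
  next
    case (BI b) with assms i show ?thesis by (auto simp: unitv_def dd_def split: if_splits)
  next
    case (Ee b) with assms i show ?thesis using mixE_EF[of "BR a" b v] by (auto simp: dd_def)
  next
    case (Ff b) with assms i show ?thesis using mixF_EF[of "BR a" b v] by (auto simp: dd_def)
  qed (use assms i in auto)
next
  case (BI a) note i = this
  show ?thesis
  proof (cases j)
    case (Ee b) with assms i show ?thesis using mixE_EF[of "BI a" b v] by (auto simp: dd_def)
  next
    case (Ff b) with assms i show ?thesis using mixF_EF[of "BI a" b v] by (auto simp: dd_def)
  qed (use assms i in auto)
next
  case (Ee a) note i = this
  show ?thesis
  proof (cases j)
    case (Ff b) with assms i show ?thesis by (auto simp: unitv_def dd_def split: if_splits)
  qed (use assms i in auto)
qed (use assms in auto)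

lemma bb_grad: "bb i j v * dd n v = bb i j v * (dd n i + dd n j)"
proof (cases "bb i j v = 0")
  case False
  then have "sc i j v \<noteq> 0 \<or> sc j i v \<noteq> 0" unfolding bb_def by auto
  then have "dd n v = dd n i + dd n j" using sc_grad[of i j v n] sc_grad[of j i v n] by auto
  then show ?thesis by simp
qed simp

lemma deriv_dd: "is_derivation n (\<lambda>x v. dd n v * x v)"
  unfolding is_derivation_def
proof (intro conjI ballI allI)
  fix x assume "x \<in> lvec n" then show "(\<lambda>v. dd n v * x v) \<in> lvec n" by (simp add: lvec_def)
next
  fix x y :: "idx \<Rightarrow> real" and a b :: real
  show "(\<lambda>v. dd n v * (a * x v + b * y v)) = (\<lambda>v. a * (dd n v * x v) + b * (dd n v * y v))"
    by (simp add: algebra_simps)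
next
  fix x y :: "idx \<Rightarrow> real"
  show "(\<lambda>v. dd n v * lbr n x y v) = (\<lambda>v. lbr n (\<lambda>v. dd n v * x v) y v + lbr n x (\<lambda>v. dd n v * y v) v)"
  proof (rule ext)
    fix v
    have "dd n v * lbr n x y v = (\<Sum>i\<in>lbasis n. \<Sum>j\<in>lbasis n. x i * y j * (bb i j v * dd n v))"
      unfolding lbr_def sum_distrib_left by (simp add: mult_ac)
    also have "\<dots> = (\<Sum>i\<in>lbasis n. \<Sum>j\<in>lbasis n. dd n i * x i * y j * bb i j v + x i * (dd n j * y j) * bb i j v)"
      unfolding bb_grad by (simp add: algebra_simps)
    also have "\<dots> = lbr n (\<lambda>v. dd n v * x v) y v + lbr n x (\<lambda>v. dd n v * y v) v"
      unfolding lbr_def by (simp add: sum.distrib)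
    finally show "dd n v * lbr n x y v = lbr n (\<lambda>v. dd n v * x v) y v + lbr n x (\<lambda>v. dd n v * y v) v" .
  qed
qed


lemma lb_split: assumes "p \<in> lbasis (Suc (Suc m))" shows "p \<in> F0 \<or> (\<exists>c<m. p \<in> Bs c)"
proof (cases p)
  case (BR a)
  with assms have a: "1 \<le> a" "a \<le> Suc m" by (auto simp: lbasis_def)
  show ?thesis
  proof (cases "a = 1")
    case True then show ?thesis using BR by (simp add: F0_def)
  next
    case False
    then have "a = Suc (Suc (a - 2))" "a - 2 < m" using a by arith+
    then show ?thesis using BR by (metis Bs_def insertI1)
  qed
next
  case (BI a)
  with assms have a: "1 \<le> a" "a \<le> Suc m" by (auto simp: lbasis_def)
  show ?thesis
  proof (cases "a = 1")
    case True then show ?thesis using BI by (simp add: F0_def)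
  next
    case False
    then have "a = Suc (Suc (a - 2))" "a - 2 < m" using a by arith+
    then show ?thesis using BI unfolding Bs_def by (metis insertI1 insertI2)
  qed
next
  case (Ee a)
  with assms have a: "a < Suc (Suc m)" by (auto simp: lbasis_def)
  show ?thesis
  proof (cases "a \<le> 1")
    case True then have "a = 0 \<or> a = 1" by arith
    then show ?thesis using Ee by (auto simp: F0_def)
  next
    case False
    then have "a = Suc (Suc (a - 2))" "a - 2 < m" using a by arith+
    then show ?thesis using Ee unfolding Bs_def by (metis insertI1 insertI2)
  qed
next
  case (Ff a)
  with assms have a: "a < Suc (Suc m)" by (auto simp: lbasis_def)
  show ?thesis
  proof (cases "a \<le> 1")
    case True then have "a = 0 \<or> a = 1" by arith
    then show ?thesis using Ff by (auto simp: F0_def)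
  next
    case False
    then have "a = Suc (Suc (a - 2))" "a - 2 < m" using a by arith+
    then show ?thesis using Ff unfolding Bs_def by (metis insertI1 insertI2)
  qed
next
  case Zz then show ?thesis by (simp add: F0_def)
qed

lemma F0_chi: "p \<in> F0 \<Longrightarrow> \<not> chi c p" by (auto simp: F0_def chi_def)
lemma Bs_chi: "chi c p \<longleftrightarrow> p \<in> Bs c" by (auto simp: chi_def Bs_def)

lemma Ric_F0: assumes "\<rho> > 0" "p \<in> F0" "q \<in> F0"
  shows "Ric (Suc (Suc m)) \<rho> p q = (if p = q then Rv (m+2) p * G \<rho> p else 0)"
proof -
  have "(\<Sum>a<m. X \<rho> p q a) = (\<Sum>a<m. X \<rho> p q 0)"
    by (rule sum.cong, simp, rule X_F0_const[OF assms])
  then show ?thesis unfolding Ric_decomp using S00_F0[OF assms, of m] by simp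
qed

lemma Ric_blk: assumes "\<rho> > 0" "c < m" "p \<in> Bs c" "q \<in> Bs c"
  shows "Ric (Suc (Suc m)) \<rho> p q = (if p = q then Rv (m+2) p * G \<rho> p else 0)"
proof -
  have "(\<Sum>a<m. X \<rho> p q a) = X \<rho> p q c + (\<Sum>a\<in>{..<m} - {c}. X \<rho> p q a)"
    using assms(2) by (simp add: sum.remove)
  also have "(\<Sum>a\<in>{..<m} - {c}. X \<rho> p q a) = (\<Sum>a\<in>{..<m} - {c}. X \<rho> p q (Suc c))"
    by (rule sum.cong, simp, rule X_blk_const[OF assms(1,3,4)], simp)
  also have "\<dots> = (real m - 1) * X \<rho> p q (Suc c)"
    using assms(2) by (simp add: of_nat_diff)
  finally show ?thesis unfolding Ric_decomp using S_blk[OF assms(1,3,4), of m] by simp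
qed

lemma Ric_val: assumes "\<rho> > 0" "p \<in> lbasis (Suc (Suc m))" "q \<in> lbasis (Suc (Suc m))"
  shows "Ric (Suc (Suc m)) \<rho> p q = (if p = q then Rv (m+2) p * G \<rho> p else 0)"
proof -
  consider "p \<in> F0" "q \<in> F0" | c where "p \<in> F0" "c < m" "q \<in> Bs c" | c where "p \<in> Bs c" "c < m" "q \<in> F0"
    | c d where "p \<in> Bs c" "q \<in> Bs d" "c < m" "d < m"
    using lb_split[OF assms(2)] lb_split[OF assms(3)] by blast
  then show ?thesis
  proof cases
    case 1 then show ?thesis using Ric_F0 assms by blast
  next
    case (2 c)
    then have "chi c p \<noteq> chi c q" using F0_chi Bs_chi by blast
    moreover then have "p \<noteq> q" by blast
    ultimately show ?thesis using Ric_par by simp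
  next
    case (3 c)
    then have "chi c p \<noteq> chi c q" using F0_chi Bs_chi by blast
    moreover then have "p \<noteq> q" by blast
    ultimately show ?thesis using Ric_par by simp
  next
    case (4 c d)
    show ?thesis
    proof (cases "c = d")
      case True then show ?thesis using Ric_blk 4 assms by blast
    next
      case False
      then have "chi c p \<noteq> chi c q" using 4 Bs_chi chi_uniq by blast
      moreover then have "p \<noteq> q" by blast
      ultimately show ?thesis using Ric_par by simp
    qed
  qed
qed

lemma Rv_dd: "Rv n v = - 2 * (real n + 2) + dd n v"
  by (cases v) (simp_all add: Rv_def dd_def)

theorem theorem4p11:
  fixes n :: nat and \<rho> :: real
  assumes "n > 1" and "\<rho> > 0"
  shows "\<exists>(lam::real) D. is_derivation n D \<and>
           (\<forall>x\<in>lvec n. ricop n \<rho> 0 x = (\<lambda>v. lam * x v + D x v))"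
proof -
  define m where "m = n - 2"
  have n: "n = Suc (Suc m)" using assms(1) unfolding m_def by arith
  have RV: "Ric n \<rho> p q = (if p = q then Rv n p * G \<rho> p else 0)" if "p \<in> lbasis n" "q \<in> lbasis n" for p q
    using Ric_val[OF assms(2), of p m q] that unfolding n by simp
  show ?thesis
  proof (intro exI conjI ballI)
    show "is_derivation n (\<lambda>x v. dd n v * x v)" by (rule deriv_dd)
  next
    fix x assume x: "x \<in> lvec n"
    have "ricop n \<rho> 0 x = (\<lambda>v. Rv n v * x v)" by (rule ricop_eq[OF assms(2) RV x])
    then show "ricop n \<rho> 0 x = (\<lambda>v. (- 2 * (real n + 2)) * x v + dd n v * x v)"
      unfolding Rv_dd by (simp add: algebra_simps)
  qed
qed

end
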